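(* Assume that the pair $(H,A)$ satisfies Condition G and let $\theta\in B^{\mathbb C}_{R'}(0)$. Then $D(H_\theta^* )=D(H)$ and $H_\theta^*=H_{\bar\theta}$.
   Context: $\mathcal H$ is a complex separable Hilbert space, $H$ and $A$ are self-adjoint on $\mathcal H$, and $U(t)=e^{\mathrm itA}$. Condition G: - (G1) $U(t)D(H)\subset D(H)$ for all real $t$, and $\sup_{|t|\le1}\|HU(t)\psi\|<\infty$ for every $\psi\in D(H)$. - (G2) The form $(\psi,\varphi)\mapsto\langle H\psi,A\varphi\rangle-\langle A\psi,H\varphi\rangle$ on $D(H)\cap D(A)$ is continuous with respect to $\|\psi\|_H+\|\varphi\|_H$, where $\|\psi\|_H=\|H\psi\|+\|\psi\|$. - (G3) There is $R>0$ such that for every $\psi\in D(H)$ the map $t\mapsto H_t\psi:=U(t)HU(-t)\psi$ extends analytically to the strip $\{|\operatorname{Im}\theta|<R\}$. This defines operators $H_\theta$ with domain $D(H)$. - (G4) $M:=\sup_{|\theta|<R}\|H_\theta(H+\mathrm i)^{-1}\|<\infty$. Put $C:=\max\{1,M\}/R$, $R':=1/(3C)$, and $B^{\mathbb C}_{R'}(0)=\{|\theta|<R'\}$. *)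

theory Defs
  imports "HOL-Analysis.Analysis"
begin

class chilbert = real_normed_vector + complete_space +
  fixes scaleC :: "complex \<Rightarrow> 'a \<Rightarrow> 'a"
    and cinner :: "'a \<Rightarrow> 'a \<Rightarrow> complex"
  assumes scaleC_of_real: "scaleC (complex_of_real r) x = r *\<^sub>R x"
    and scaleC_add_left: "scaleC (a + b) x = scaleC a x + scaleC b x"
    and scaleC_add_right: "scaleC a (x + y) = scaleC a x + scaleC a y"
    and scaleC_mult: "scaleC (a * b) x = scaleC a (scaleC b x)"
    and norm_scaleC: "norm (scaleC a x) = cmod a * norm x"
    and cinner_commute: "cinner x y = cnj (cinner y x)"
    and cinner_add_right: "cinner x (y + z) = cinner x y + cinner x z"
    and cinner_scaleC_right: "cinner x (scaleC a y) = a * cinner x y"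
    and norm_eq_cinner: "complex_of_real ((norm x)\<^sup>2) = cinner x x"

definition csubspace :: "'a::chilbert set \<Rightarrow> bool" where
  "csubspace S \<longleftrightarrow> 0 \<in> S \<and> (\<forall>x\<in>S. \<forall>y\<in>S. x + y \<in> S) \<and> (\<forall>c. \<forall>x\<in>S. scaleC c x \<in> S)"

definition lin_op :: "'a::chilbert set \<Rightarrow> ('a \<Rightarrow> 'a) \<Rightarrow> bool" where
  "lin_op D T \<longleftrightarrow> csubspace D \<and> (\<forall>x\<in>D. \<forall>y\<in>D. T (x + y) = T x + T y)
      \<and> (\<forall>c. \<forall>x\<in>D. T (scaleC c x) = scaleC c (T x))"

definition adj_dom :: "'a::chilbert set \<Rightarrow> ('a \<Rightarrow> 'a) \<Rightarrow> 'a set" where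
  "adj_dom D T = {\<phi>. \<exists>\<eta>. \<forall>\<psi>\<in>D. cinner (T \<psi>) \<phi> = cinner \<psi> \<eta>}"

definition adj_op :: "'a::chilbert set \<Rightarrow> ('a \<Rightarrow> 'a) \<Rightarrow> 'a \<Rightarrow> 'a" where
  "adj_op D T \<phi> = (THE \<eta>. \<forall>\<psi>\<in>D. cinner (T \<psi>) \<phi> = cinner \<psi> \<eta>)"

definition self_adjoint :: "'a::chilbert set \<Rightarrow> ('a \<Rightarrow> 'a) \<Rightarrow> bool" where
  "self_adjoint D T \<longleftrightarrow> lin_op D T \<and> closure D = UNIV \<and> adj_dom D T = D
      \<and> (\<forall>\<phi>\<in>D. adj_op D T \<phi> = T \<phi>)"

text \<open>\<open>U(t) = e^{itA}\<close>: the strongly continuous one-parameter unitary group whose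
generator is \<open>iA\<close> (exists and is unique for self-adjoint \<open>A\<close> by Stone's theorem).\<close>

definition is_exp_itA :: "'a::chilbert set \<Rightarrow> ('a \<Rightarrow> 'a) \<Rightarrow> (real \<Rightarrow> 'a \<Rightarrow> 'a) \<Rightarrow> bool" where
  "is_exp_itA DA A U \<longleftrightarrow>
     U 0 = id \<and> (\<forall>s t. U (s + t) = U s \<circ> U t)
     \<and> (\<forall>t. lin_op UNIV (U t) \<and> (\<forall>x. norm (U t x) = norm x) \<and> surj (U t))
     \<and> (\<forall>\<psi>. continuous_on UNIV (\<lambda>t. U t \<psi>))
     \<and> (\<forall>\<psi>. \<psi> \<in> DA \<longleftrightarrow> (\<exists>v. ((\<lambda>t. U t \<psi>) has_vector_derivative v) (at 0)))
     \<and> (\<forall>\<psi>\<in>DA. ((\<lambda>t. U t \<psi>) has_vector_derivative scaleC \<i> (A \<psi>)) (at 0))"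

definition vholomorphic_on :: "(complex \<Rightarrow> 'a::chilbert) \<Rightarrow> complex set \<Rightarrow> bool" where
  "vholomorphic_on f S \<longleftrightarrow> (\<forall>z\<in>S. \<exists>v. (f has_derivative (\<lambda>h. scaleC h v)) (at z))"

definition graph_norm :: "('a::chilbert \<Rightarrow> 'a) \<Rightarrow> 'a \<Rightarrow> real" where
  "graph_norm H \<psi> = norm (H \<psi>) + norm \<psi>"

definition res_i :: "'a::chilbert set \<Rightarrow> ('a \<Rightarrow> 'a) \<Rightarrow> 'a \<Rightarrow> 'a" where
  "res_i D H \<phi> = (THE \<psi>. \<psi> \<in> D \<and> H \<psi> + scaleC \<i> \<psi> = \<phi>)"

definition condG1 :: "'a::chilbert set \<Rightarrow> ('a \<Rightarrow> 'a) \<Rightarrow> (real \<Rightarrow> 'a \<Rightarrow> 'a) \<Rightarrow> bool" where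
  "condG1 DH H U \<longleftrightarrow> (\<forall>t. U t ` DH \<subseteq> DH)
     \<and> (\<forall>\<psi>\<in>DH. bdd_above ((\<lambda>t. norm (H (U t \<psi>))) ` {t. \<bar>t\<bar> \<le> 1}))"

definition condG2 :: "'a::chilbert set \<Rightarrow> ('a \<Rightarrow> 'a) \<Rightarrow> 'a set \<Rightarrow> ('a \<Rightarrow> 'a) \<Rightarrow> bool" where
  "condG2 DH H DA A \<longleftrightarrow>
     (let S = DH \<inter> DA; q = (\<lambda>\<psi> \<phi>. cinner (H \<psi>) (A \<phi>) - cinner (A \<psi>) (H \<phi>)) in
      \<forall>\<psi>0\<in>S. \<forall>\<phi>0\<in>S. \<forall>e>0. \<exists>d>0. \<forall>\<psi>\<in>S. \<forall>\<phi>\<in>S.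
        graph_norm H (\<psi> - \<psi>0) + graph_norm H (\<phi> - \<phi>0) < d \<longrightarrow> cmod (q \<psi> \<phi> - q \<psi>0 \<phi>0) < e)"

definition condG3 :: "'a::chilbert set \<Rightarrow> ('a \<Rightarrow> 'a) \<Rightarrow> (real \<Rightarrow> 'a \<Rightarrow> 'a) \<Rightarrow> real
     \<Rightarrow> (complex \<Rightarrow> 'a \<Rightarrow> 'a) \<Rightarrow> bool" where
  "condG3 DH H U R Hth \<longleftrightarrow> R > 0 \<and>
     (\<forall>\<psi>\<in>DH. vholomorphic_on (\<lambda>\<theta>. Hth \<theta> \<psi>) {\<theta>. \<bar>Im \<theta>\<bar> < R}
              \<and> (\<forall>t::real. Hth (complex_of_real t) \<psi> = U t (H (U (- t) \<psi>))))"

definition G4_set :: "'a::chilbert set \<Rightarrow> ('a \<Rightarrow> 'a) \<Rightarrow> real \<Rightarrow> (complex \<Rightarrow> 'a \<Rightarrow> 'a) \<Rightarrow> real set" where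
  "G4_set DH H R Hth = {norm (Hth \<theta> (res_i DH H \<phi>)) | \<theta> \<phi>. cmod \<theta> < R \<and> norm \<phi> \<le> 1}"

definition condG4 :: "'a::chilbert set \<Rightarrow> ('a \<Rightarrow> 'a) \<Rightarrow> real \<Rightarrow> (complex \<Rightarrow> 'a \<Rightarrow> 'a) \<Rightarrow> bool" where
  "condG4 DH H R Hth \<longleftrightarrow> bdd_above (G4_set DH H R Hth)"

definition G4_M :: "'a::chilbert set \<Rightarrow> ('a \<Rightarrow> 'a) \<Rightarrow> real \<Rightarrow> (complex \<Rightarrow> 'a \<Rightarrow> 'a) \<Rightarrow> real" where
  "G4_M DH H R Hth = Sup (G4_set DH H R Hth)"

end

theory Submission
  imports Defs "HOL-Complex_Analysis.Complex_Analysis"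
begin


declare [[show_sorts=false]]

lemma scaleC_zero_left[simp]: "scaleC 0 x = 0"
  using scaleC_of_real[of 0 x] by simp

lemma scaleC_one[simp]: "scaleC 1 x = x"
  using scaleC_of_real[of 1 x] by simp

lemma scaleC_zero_right[simp]: "scaleC a 0 = 0"
  using scaleC_add_right[of a 0 0] by simp

lemma scaleC_minus_right: "scaleC a (- x) = - scaleC a x"
  proof -
  have "scaleC a x + scaleC a (-x) = 0" using scaleC_add_right[of a x "-x"] by simp
  from minus_unique[OF this] show ?thesis by simp
qed

lemma scaleC_diff_right: "scaleC a (x - y) = scaleC a x - scaleC a y"
  using scaleC_add_right[of a x "-y"] scaleC_minus_right[of a y] by simp

lemma scaleC_minus_left: "scaleC (- a) x = - scaleC a x"
  proof -
  have "scaleC a x + scaleC (-a) x = 0" using scaleC_add_left[of a "-a" x] by simp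
  from minus_unique[OF this] show ?thesis by simp
qed

lemma scaleC_diff_left: "scaleC (a - b) x = scaleC a x - scaleC b x"
  using scaleC_add_left[of a "-b" x] scaleC_minus_left[of b x] by simp

lemma scaleC_neg1: "scaleC (-1) x = - x"
  by (simp add: scaleC_minus_left)

lemma cinner_zero_right[simp]: "cinner x 0 = 0"
  using cinner_add_right[of x 0 0] by simp

lemma cinner_zero_left[simp]: "cinner 0 x = 0"
  using cinner_commute[of 0 x] by simp

lemma cinner_add_left: "cinner (x + y) z = cinner x z + cinner y z"
  by (simp add: cinner_commute[of "x+y" z] cinner_commute[of x z] cinner_commute[of y z] cinner_add_right)

lemma cinner_scaleC_left: "cinner (scaleC a x) y = cnj a * cinner x y"
  by (simp add: cinner_commute[of "scaleC a x" y] cinner_commute[of x y] cinner_scaleC_right)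

lemma cinner_minus_right: "cinner x (- y) = - cinner x y"
  proof -
  have "cinner x y + cinner x (-y) = 0" using cinner_add_right[of x y "-y"] by simp
  from minus_unique[OF this] show ?thesis by simp
qed

lemma cinner_minus_left: "cinner (- x) y = - cinner x y"
  proof -
  have "cinner x y + cinner (-x) y = 0" using cinner_add_left[of x "-x" y] by simp
  from minus_unique[OF this] show ?thesis by simp
qed

lemma cinner_diff_right: "cinner x (y - z) = cinner x y - cinner x z"
  using cinner_add_right[of x y "-z"] cinner_minus_right[of x z] by simp

lemma cinner_diff_left: "cinner (x - y) z = cinner x z - cinner y z"
  using cinner_add_left[of x "-y" z] cinner_minus_left[of y z] by simp

lemma cinner_self: "cinner x x = complex_of_real ((norm x)^2)"
  by (rule norm_eq_cinner[symmetric])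

lemma cinner_self_zero_iff: "cinner x x = 0 \<longleftrightarrow> x = 0"
  by (simp add: cinner_self)

lemma scaleC_scaleR: "scaleC (complex_of_real r) x = r *\<^sub>R x"
  by (rule scaleC_of_real)

lemma proj_identity:
  assumes "y \<noteq> 0"
  shows "(norm (x - scaleC (cinner y x / cinner y y) y))^2 = (norm x)^2 - (cmod (cinner x y))^2 / (norm y)^2"
proof -
  define t where "t = cinner y x / cinner y y"
  define w where "w = x - scaleC t y"
  have yy: "cinner y y = complex_of_real ((norm y)^2)" by (rule cinner_self)
  have ny: "norm y > 0" using assms by simp
  have e: "cinner w w = cinner x x - t * cinner x y - cnj t * cinner y x + cnj t * t * cinner y y"
    by (simp add: w_def cinner_diff_left cinner_diff_right cinner_scaleC_left
        cinner_scaleC_right algebra_simps)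
  have cyx: "cinner y x = cnj (cinner x y)" by (rule cinner_commute)
  have "cinner y y \<noteq> 0" using assms cinner_self_zero_iff by blast
  hence "t * cinner y y = cinner y x" by (simp add: t_def)
  hence "cnj t * t * cinner y y = cnj t * cinner y x"
    by (simp add: mult.assoc)
  with e have e2: "cinner w w = cinner x x - t * cinner x y"
    by simp
  have "t * cinner x y = complex_of_real ((cmod (cinner x y))^2 / (norm y)^2)"
    unfolding t_def yy cyx
    by (simp add: complex_norm_square[symmetric] mult.commute)
  hence "complex_of_real ((norm w)^2)
       = complex_of_real ((norm x)^2 - (cmod (cinner x y))^2 / (norm y)^2)"
    using e2 unfolding cinner_self of_real_diff by simp
  hence "(norm w)^2 = (norm x)^2 - (cmod (cinner x y))^2 / (norm y)^2"
    using of_real_eq_iff by blast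
  then show ?thesis unfolding w_def t_def .
qed

lemma cauchy_schwarz: "cmod (cinner x y) \<le> norm x * norm y"
proof (cases "y = 0")
  case True then show ?thesis by simp
next
  case False
  have ny: "norm y > 0" using False by simp
  have "(cmod (cinner x y))^2 / (norm y)^2 \<le> (norm x)^2"
    using proj_identity[OF False, of x] by (metis diff_ge_0_iff_ge zero_le_power2)
  hence "(cmod (cinner x y))^2 \<le> (norm x * norm y)^2"
    using ny by (simp add: field_simps power_mult_distrib)
  then show ?thesis
    by (meson mult_nonneg_nonneg norm_ge_zero power2_le_imp_le)
qed

lemma bounded_linear_cinner_right: "bounded_linear (cinner x)"
proof
  fix y z show "cinner x (y + z) = cinner x y + cinner x z" by (rule cinner_add_right)
next
  fix r y show "cinner x (r *\<^sub>R y) = r *\<^sub>R cinner x y"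
    by (simp add: scaleC_of_real[symmetric] cinner_scaleC_right scaleR_conv_of_real)
next
  show "\<exists>K. \<forall>y. norm (cinner x y) \<le> norm y * K"
    using cauchy_schwarz by (metis mult.commute)
qed

lemma bounded_linear_cinner_left: "bounded_linear (\<lambda>y. cinner y x)"
proof
  fix y z show "cinner (y + z) x = cinner y x + cinner z x" by (rule cinner_add_left)
next
  fix r y show "cinner (r *\<^sub>R y) x = r *\<^sub>R cinner y x"
    by (simp add: scaleC_of_real[symmetric] cinner_scaleC_left scaleR_conv_of_real)
next
  show "\<exists>K. \<forall>y. norm (cinner y x) \<le> norm y * K"
    using cauchy_schwarz by (metis mult.commute)
qed



lemma norm_add_sq: "complex_of_real ((norm (x+y))^2) = complex_of_real ((norm x)^2) + complex_of_real ((norm y)^2) + cinner x y + cnj (cinner x y)"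
  unfolding cinner_self[symmetric]
  by (simp add: cinner_add_left cinner_add_right cinner_commute[of y x])

lemma norm_diff_sq: "complex_of_real ((norm (x-y))^2) = complex_of_real ((norm x)^2) + complex_of_real ((norm y)^2) - cinner x y - cnj (cinner x y)"
  unfolding cinner_self[symmetric]
  by (simp add: cinner_diff_left cinner_diff_right cinner_commute[of y x])

lemma parallelogram: "(norm ((x::'a::chilbert)+y))^2 + (norm (x-y))^2 = 2 * (norm x)^2 + 2 * (norm y)^2"
proof -
  have "complex_of_real ((norm (x+y))^2 + (norm (x-y))^2) = complex_of_real (2 * (norm x)^2 + 2 * (norm y)^2)"
    using norm_add_sq[of x y] norm_diff_sq[of x y] by simp
  then show ?thesis using of_real_eq_iff by blast
qed

lemma cinner_preserve:
  assumes lin: "lin_op UNIV T" and nm: "\<And>x. norm (T x) = norm x"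
  shows "cinner (T x) (T y) = cinner x y"
proof -
  have add: "\<And>a b. T (a + b) = T a + T b" and sc: "\<And>c a. T (scaleC c a) = scaleC c (T a)"
    using lin unfolding lin_op_def by auto
  have r1: "cinner (T x) (T y) + cnj (cinner (T x) (T y)) = cinner x y + cnj (cinner x y)"
    using norm_add_sq[of x y] norm_add_sq[of "T x" "T y"] nm[of "x+y"] nm[of x] nm[of y] add[of x y]
    by simp
  have r2: "cinner (T x) (T (scaleC \<i> y)) + cnj (cinner (T x) (T (scaleC \<i> y)))
      = cinner x (scaleC \<i> y) + cnj (cinner x (scaleC \<i> y))"
    using norm_add_sq[of x "scaleC \<i> y"] norm_add_sq[of "T x" "T (scaleC \<i> y)"] nm[of "x+scaleC \<i> y"]
      nm[of x] nm[of "scaleC \<i> y"] add[of x "scaleC \<i> y"]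
    by simp
  hence r2': "\<i> * cinner (T x) (T y) + cnj (\<i> * cinner (T x) (T y)) = \<i> * cinner x y + cnj (\<i> * cinner x y)"
    by (simp add: sc cinner_scaleC_right)
  show ?thesis
  proof (rule complex_eqI)
    show "Re (cinner (T x) (T y)) = Re (cinner x y)"
      using arg_cong[OF r1, of Re] by simp
    show "Im (cinner (T x) (T y)) = Im (cinner x y)"
      using arg_cong[OF r2', of Re] by simp
  qed
qed

lemma closed_subspace_perp_UNIV:
  fixes V :: "'a::chilbert set"
  assumes sub: "csubspace V" and cl: "closed V"
    and perp: "\<And>z. (\<forall>v\<in>V. cinner v z = 0) \<Longrightarrow> z = 0"
  shows "V = UNIV"
proof -
  have V0: "0 \<in> V" and Vadd: "\<And>a b. a \<in> V \<Longrightarrow> b \<in> V \<Longrightarrow> a + b \<in> V"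
    and Vsc: "\<And>c a. a \<in> V \<Longrightarrow> scaleC c a \<in> V"
    using sub unfolding csubspace_def by auto
  have VscR: "\<And>r a. a \<in> V \<Longrightarrow> r *\<^sub>R a \<in> V"
    using Vsc scaleC_of_real by metis
  have Vdiff: "\<And>a b. a \<in> V \<Longrightarrow> b \<in> V \<Longrightarrow> a - b \<in> V"
    using Vadd VscR[of _ "-1"] by (metis scaleR_minus1_left diff_conv_add_uminus)
  show ?thesis
  proof (rule set_eqI, rule iffI)
    fix y :: 'a assume "y \<in> UNIV"
    define N where "N = (\<lambda>v. norm (y - v)) ` V"
    define d where "d = Inf N"
    have Nne: "N \<noteq> {}" using V0 N_def by auto
    have Nbdd: "bdd_below N" unfolding N_def by (rule bdd_belowI[of _ 0]) auto
    have d0: "0 \<le> d" unfolding d_def N_def using Nne N_def by (intro cInf_greatest) auto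
    have dle: "\<And>v. v \<in> V \<Longrightarrow> d \<le> norm (y - v)"
      unfolding d_def using Nbdd N_def by (auto intro: cInf_lower)
    have "\<forall>n. \<exists>v. v \<in> V \<and> (norm (y - v))^2 < d^2 + inverse (real (Suc n))"
    proof
      fix n
      define e where "e = sqrt (d^2 + inverse (real (Suc n)))"
      have "d^2 < d^2 + inverse (real (Suc n))" by simp
      hence "sqrt (d^2) < e" unfolding e_def using real_sqrt_less_iff by blast
      hence de: "d < e" using d0 by simp
      then obtain a where "a \<in> N" "a < e" using cInf_lessD[OF Nne] unfolding d_def by blast
      then obtain v where v: "v \<in> V" "norm (y - v) < e" unfolding N_def by auto
      have "(norm (y - v))^2 < e^2"
        using v(2) by (simp add: power_strict_mono)
      also have "e^2 = d^2 + inverse (real (Suc n))"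
        unfolding e_def by (simp add: add_nonneg_nonneg)
      finally show "\<exists>v. v \<in> V \<and> (norm (y - v))^2 < d^2 + inverse (real (Suc n))" using v by blast
    qed
    then obtain vs where vs: "\<And>n. vs n \<in> V" "\<And>n. (norm (y - vs n))^2 < d^2 + inverse (real (Suc n))"
      by metis
    have close: "(norm (vs m - vs n))^2 \<le> 2 * inverse (real (Suc m)) + 2 * inverse (real (Suc n))" for m n
    proof -
      define u where "u = (1/2) *\<^sub>R (vs m + vs n)"
      have "u \<in> V" unfolding u_def using vs(1) Vadd VscR by blast
      hence du: "d \<le> norm (y - u)" by (rule dle)
      have eq1: "(y - vs m) + (y - vs n) = 2 *\<^sub>R (y - u)"
        unfolding u_def by (simp add: algebra_simps scaleR_2)
      have eq2: "(y - vs m) - (y - vs n) = vs n - vs m" by simp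
      have "(norm (2 *\<^sub>R (y - u)))^2 = 4 * (norm (y - u))^2"
        by (simp add: power_mult_distrib)
      moreover have "4 * d^2 \<le> 4 * (norm (y - u))^2"
        using du d0 by (simp add: power_mono)
      ultimately have "(norm (vs n - vs m))^2 \<le> 2 * (norm (y - vs m))^2 + 2 * (norm (y - vs n))^2 - 4 * d^2"
        using parallelogram[of "y - vs m" "y - vs n"] unfolding eq1 eq2 by linarith
      also have "\<dots> \<le> 2 * inverse (real (Suc m)) + 2 * inverse (real (Suc n))"
        using vs(2)[of m] vs(2)[of n] by linarith
      finally show ?thesis by (simp add: norm_minus_commute)
    qed
    have "Cauchy vs"
    proof (rule metric_CauchyI)
      fix e :: real assume e: "0 < e"
      obtain M :: nat where M: "4 / e^2 < real M" using reals_Archimedean2 by blast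
      have "4 / real (Suc M) < e^2"
        using M e by (simp add: field_simps) (smt (verit) zero_less_power)
      show "\<exists>M. \<forall>m\<ge>M. \<forall>n\<ge>M. dist (vs m) (vs n) < e"
      proof (intro exI allI impI)
        fix m n assume mn: "M \<le> m" "M \<le> n"
        have "inverse (real (Suc m)) \<le> inverse (real (Suc M))" "inverse (real (Suc n)) \<le> inverse (real (Suc M))"
          using mn by (auto simp: field_simps)
        moreover have "(dist (vs m) (vs n))^2 = (norm (vs m - vs n))^2" by (simp add: dist_norm)
        moreover have "4 / real (Suc M) = 4 * inverse (real (Suc M))" by (simp add: divide_inverse)
        ultimately have "(dist (vs m) (vs n))^2 \<le> 4 / real (Suc M)"
          using close[of m n] by linarith
        also have "\<dots> < e^2" by fact
        finally show "dist (vs m) (vs n) < e"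
          using e by (meson power_less_imp_less_base less_le)
      qed
    qed
    then obtain p where p: "vs \<longlonglongrightarrow> p" using Cauchy_convergent convergent_def by blast
    have pV: "p \<in> V" using closed_sequentially[OF cl] vs(1) p by blast
    have "(\<lambda>n. (norm (y - vs n))^2) \<longlonglongrightarrow> (norm (y - p))^2"
      by (intro tendsto_intros p)
    moreover have "(\<lambda>n. d^2 + inverse (real (Suc n))) \<longlonglongrightarrow> d^2 + 0"
      by (intro tendsto_intros LIMSEQ_inverse_real_of_nat)
    ultimately have yp: "(norm (y - p))^2 \<le> d^2"
      using vs(2) by (intro LIMSEQ_le) (auto intro: less_imp_le)
    define z where "z = y - p"
    have "\<forall>v\<in>V. cinner v z = 0"
    proof
      fix v assume v: "v \<in> V"
      show "cinner v z = 0"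
      proof (cases "v = 0")
        case True then show ?thesis by simp
      next
        case False
        define t where "t = cinner v z / cinner v v"
        have "p + scaleC t v \<in> V" using pV v Vadd Vsc by blast
        hence "d \<le> norm (y - (p + scaleC t v))" by (rule dle)
        hence "d^2 \<le> (norm (z - scaleC t v))^2"
          using d0 by (simp add: z_def power_mono algebra_simps)
        hence "(norm z)^2 \<le> (norm z)^2 - (cmod (cinner z v))^2 / (norm v)^2"
          using yp proj_identity[OF False, of z] unfolding t_def z_def by linarith
        hence "(cmod (cinner z v))^2 / (norm v)^2 \<le> 0" by linarith
        hence "cmod (cinner z v) = 0" using False
          by (simp add: divide_le_0_iff)
        hence "cinner z v = 0" by simp
        then show ?thesis by (metis cinner_commute complex_cnj_zero)
      qed
    qed
    hence "z = 0" by (rule perp)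
    then show "y \<in> V" using pV z_def by simp
  qed simp
qed



lemma bounded_linear_scaleC: "bounded_linear (scaleC c :: 'a::chilbert \<Rightarrow> 'a)"
proof
  fix x y :: 'a show "scaleC c (x + y) = scaleC c x + scaleC c y" by (rule scaleC_add_right)
next
  fix r and x :: 'a
  have "scaleC c (r *\<^sub>R x) = scaleC c (scaleC (complex_of_real r) x)" by (simp add: scaleC_of_real)
  also have "\<dots> = scaleC (complex_of_real r) (scaleC c x)" by (simp add: scaleC_mult[symmetric] mult.commute)
  finally show "scaleC c (r *\<^sub>R x) = r *\<^sub>R scaleC c x" by (simp add: scaleC_of_real)
next
  show "\<exists>K. \<forall>x::'a. norm (scaleC c x) \<le> norm x * K"
    by (rule exI[of _ "cmod c"]) (simp add: norm_scaleC mult.commute)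
qed

lemma dense_unique:
  fixes D :: "'a::chilbert set"
  assumes "closure D = UNIV" and "\<forall>\<psi>\<in>D. cinner \<psi> a = cinner \<psi> b"
  shows "a = b"
proof -
  define c where "c = a - b"
  have cont: "continuous_on UNIV (\<lambda>\<psi>. cinner \<psi> c)"
    by (rule linear_continuous_on[OF bounded_linear_cinner_left])
  have cl: "closed {\<psi>. cinner \<psi> c = 0}"
    using closed_Collect_eq[OF cont continuous_on_const, of 0] by simp
  have "\<And>\<psi>. \<psi> \<in> D \<Longrightarrow> cinner \<psi> c = 0"
    using assms(2) unfolding c_def cinner_diff_right by simp
  hence "D \<subseteq> {\<psi>. cinner \<psi> c = 0}" by blast
  hence "closure D \<subseteq> {\<psi>. cinner \<psi> c = 0}" using cl by (rule closure_minimal)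
  hence "cinner c c = 0" using assms(1) by blast
  hence "c = 0" using cinner_self_zero_iff by blast
  thus ?thesis unfolding c_def by simp
qed

lemma adj_op_eqI:
  fixes D :: "'a::chilbert set"
  assumes "closure D = UNIV" and "\<forall>\<psi>\<in>D. cinner (T \<psi>) \<phi> = cinner \<psi> \<eta>"
  shows "\<phi> \<in> adj_dom D T" and "adj_op D T \<phi> = \<eta>"
proof -
  show "\<phi> \<in> adj_dom D T" using assms(2) unfolding adj_dom_def by blast
  show "adj_op D T \<phi> = \<eta>"
    unfolding adj_op_def
  proof (rule the_equality)
    show "\<forall>\<psi>\<in>D. cinner (T \<psi>) \<phi> = cinner \<psi> \<eta>" by fact
    fix \<eta>' assume "\<forall>\<psi>\<in>D. cinner (T \<psi>) \<phi> = cinner \<psi> \<eta>'"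
    hence "\<forall>\<psi>\<in>D. cinner \<psi> \<eta>' = cinner \<psi> \<eta>" using assms(2) by auto
    thus "\<eta>' = \<eta>" using dense_unique[OF assms(1)] by blast
  qed
qed

lemma lin_opD:
  assumes "lin_op D T"
  shows "0 \<in> D" "\<And>x y. x \<in> D \<Longrightarrow> y \<in> D \<Longrightarrow> x + y \<in> D"
    "\<And>c x. x \<in> D \<Longrightarrow> scaleC c x \<in> D"
    "\<And>x y. x \<in> D \<Longrightarrow> y \<in> D \<Longrightarrow> T (x + y) = T x + T y"
    "\<And>c x. x \<in> D \<Longrightarrow> T (scaleC c x) = scaleC c (T x)"
  using assms unfolding lin_op_def csubspace_def by auto

lemma lin_op_diff:
  assumes "lin_op D T" "x \<in> D" "y \<in> D"
  shows "x - y \<in> D" "T (x - y) = T x - T y" "T 0 = 0"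
proof -
  have m: "- y \<in> D" "T (- y) = - T y"
    using lin_opD(3,5)[OF assms(1), of y "-1"] assms(3) by (auto simp: scaleC_neg1)
  show "x - y \<in> D" using lin_opD(2)[OF assms(1) assms(2) m(1)] by simp
  show "T (x - y) = T x - T y" using lin_opD(4)[OF assms(1) assms(2) m(1)] m(2) by simp
  show "T 0 = 0" using lin_opD(5)[OF assms(1), of y 0] assms(3) by simp
qed

lemma sa_sym:
  fixes D :: "'a::chilbert set"
  assumes sa: "self_adjoint D H" and "\<psi> \<in> D" "\<phi> \<in> D"
  shows "cinner (H \<psi>) \<phi> = cinner \<psi> (H \<phi>)"
proof -
  have dense: "closure D = UNIV" and dom: "adj_dom D H = D" and op: "\<forall>\<phi>\<in>D. adj_op D H \<phi> = H \<phi>"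
    using sa unfolding self_adjoint_def by auto
  obtain \<eta> where \<eta>: "\<forall>\<psi>\<in>D. cinner (H \<psi>) \<phi> = cinner \<psi> \<eta>"
    using assms(3) dom unfolding adj_dom_def by blast
  have "adj_op D H \<phi> = \<eta>" using adj_op_eqI(2)[OF dense \<eta>] .
  hence "\<eta> = H \<phi>" using op assms(3) by simp
  thus ?thesis using \<eta> assms(2) by simp
qed

lemma norm_res:
  fixes D :: "'a::chilbert set"
  assumes sa: "self_adjoint D H" and "\<psi> \<in> D"
  shows "(norm (H \<psi> + scaleC (complex_of_real s * \<i>) \<psi>))^2 = (norm (H \<psi>))^2 + s^2 * (norm \<psi>)^2"
proof -
  define r where "r = cinner (H \<psi>) \<psi>"
  have r1: "r = cinner \<psi> (H \<psi>)" using sa_sym[OF sa assms(2) assms(2)] r_def by simp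
  have r2: "cnj r = cinner \<psi> (H \<psi>)" unfolding r_def using cinner_commute[of \<psi> "H \<psi>"] by simp
  have rr: "cnj r = r" using r1 r2 by simp
  have c: "cinner (H \<psi>) (scaleC (complex_of_real s * \<i>) \<psi>) = complex_of_real s * \<i> * r"
    by (simp add: cinner_scaleC_right r_def)
  have X: "cinner (H \<psi>) (scaleC (complex_of_real s * \<i>) \<psi>) + cnj (cinner (H \<psi>) (scaleC (complex_of_real s * \<i>) \<psi>)) = 0"
    unfolding c using rr by simp
  have "complex_of_real ((norm (H \<psi> + scaleC (complex_of_real s * \<i>) \<psi>))^2)
      = complex_of_real ((norm (H \<psi>))^2) + complex_of_real ((norm (scaleC (complex_of_real s * \<i>) \<psi>))^2)"
    using norm_add_sq[of "H \<psi>" "scaleC (complex_of_real s * \<i>) \<psi>"] by (simp only: add.assoc X add_0_right)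
  hence "(norm (H \<psi> + scaleC (complex_of_real s * \<i>) \<psi>))^2
      = (norm (H \<psi>))^2 + (norm (scaleC (complex_of_real s * \<i>) \<psi>))^2"
    by (metis of_real_add of_real_eq_iff)
  also have "(norm (scaleC (complex_of_real s * \<i>) \<psi>))^2 = s^2 * (norm \<psi>)^2"
    by (simp add: norm_scaleC norm_mult power_mult_distrib)
  finally show ?thesis .
qed

lemma norm_res_ge:
  fixes D :: "'a::chilbert set"
  assumes sa: "self_adjoint D H" and "\<psi> \<in> D"
  shows "\<bar>s\<bar> * norm \<psi> \<le> norm (H \<psi> + scaleC (complex_of_real s * \<i>) \<psi>)"
    and "norm (H \<psi>) \<le> norm (H \<psi> + scaleC (complex_of_real s * \<i>) \<psi>)"
proof -
  have e: "(norm (H \<psi> + scaleC (complex_of_real s * \<i>) \<psi>))^2 = (norm (H \<psi>))^2 + s^2 * (norm \<psi>)^2"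
    by (rule norm_res[OF assms])
  have "(\<bar>s\<bar> * norm \<psi>)^2 \<le> (norm (H \<psi> + scaleC (complex_of_real s * \<i>) \<psi>))^2"
    unfolding e by (simp add: power_mult_distrib)
  thus "\<bar>s\<bar> * norm \<psi> \<le> norm (H \<psi> + scaleC (complex_of_real s * \<i>) \<psi>)"
    by (meson norm_ge_zero power2_le_imp_le)
  have "(norm (H \<psi>))^2 \<le> (norm (H \<psi> + scaleC (complex_of_real s * \<i>) \<psi>))^2"
    unfolding e by simp
  thus "norm (H \<psi>) \<le> norm (H \<psi> + scaleC (complex_of_real s * \<i>) \<psi>)"
    by (meson norm_ge_zero power2_le_imp_le)
qed



lemma res_surj:
  fixes D :: "'a::chilbert set"
  assumes sa: "self_adjoint D H" and s0: "s \<noteq> 0"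
  shows "\<exists>\<psi>\<in>D. H \<psi> + scaleC (complex_of_real s * \<i>) \<psi> = y"
proof -
  define c where "c = complex_of_real s * \<i>"
  have lin: "lin_op D H" and dense: "closure D = UNIV" and dom: "adj_dom D H = D"
    and op: "\<forall>\<phi>\<in>D. adj_op D H \<phi> = H \<phi>"
    using sa unfolding self_adjoint_def by auto
  note L = lin_opD[OF lin]
  define V where "V = (\<lambda>\<psi>. H \<psi> + scaleC c \<psi>) ` D"
  have keyV: "\<And>\<psi>1 \<psi>2. \<psi>1 \<in> D \<Longrightarrow> \<psi>2 \<in> D \<Longrightarrow>
      (H \<psi>1 + scaleC c \<psi>1) - (H \<psi>2 + scaleC c \<psi>2) = H (\<psi>1 - \<psi>2) + scaleC c (\<psi>1 - \<psi>2)"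
    using lin_op_diff[OF lin] by (simp add: scaleC_diff_right)
  have sub: "csubspace V"
    unfolding csubspace_def
  proof (intro conjI ballI allI)
    show "0 \<in> V" unfolding V_def using L(1) lin_op_diff(3)[OF lin L(1) L(1)]
      by (auto intro!: image_eqI[of _ _ 0])
  next
    fix x y assume "x \<in> V" "y \<in> V"
    then obtain a b where ab: "a \<in> D" "b \<in> D" "x = H a + scaleC c a" "y = H b + scaleC c b"
      unfolding V_def by auto
    have "x + y = H (a + b) + scaleC c (a + b)"
      using ab L(4) by (simp add: scaleC_add_right algebra_simps)
    thus "x + y \<in> V" unfolding V_def using L(2)[OF ab(1,2)] by blast
  next
    fix a x assume "x \<in> V"
    then obtain b where b: "b \<in> D" "x = H b + scaleC c b" unfolding V_def by auto
    have "scaleC a (scaleC c b) = scaleC c (scaleC a b)"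
      by (simp add: scaleC_mult[symmetric] mult.commute)
    hence "scaleC a x = H (scaleC a b) + scaleC c (scaleC a b)"
      using b L(5) by (simp add: scaleC_add_right)
    thus "scaleC a x \<in> V" unfolding V_def using L(3)[OF b(1)] by blast
  qed
  have cl: "closed V"
    unfolding closed_sequential_limits
  proof (intro allI impI, elim conjE)
    fix x l assume xV: "\<forall>n. x n \<in> V" and xl: "x \<longlonglongrightarrow> l"
    have "\<forall>n. \<exists>p. p \<in> D \<and> x n = H p + scaleC c p" using xV unfolding V_def by blast
    then obtain ps where ps0: "\<forall>n. ps n \<in> D \<and> x n = H (ps n) + scaleC c (ps n)"
      using choice[of "\<lambda>n p. p \<in> D \<and> x n = H p + scaleC c p"] by blast
    have ps: "\<And>n. ps n \<in> D" "\<And>n. x n = H (ps n) + scaleC c (ps n)" using ps0 by auto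
    have xC: "Cauchy x" using xl by (rule LIMSEQ_imp_Cauchy)
    have bnd: "\<bar>s\<bar> * norm (ps m - ps n) \<le> norm (x m - x n)"
        "norm (H (ps m - ps n)) \<le> norm (x m - x n)" for m n
    proof -
      have d: "ps m - ps n \<in> D" using lin_op_diff(1)[OF lin ps(1) ps(1)] .
      have "x m - x n = H (ps m - ps n) + scaleC c (ps m - ps n)"
        using ps keyV[OF ps(1) ps(1)] by simp
      thus "\<bar>s\<bar> * norm (ps m - ps n) \<le> norm (x m - x n)"
        "norm (H (ps m - ps n)) \<le> norm (x m - x n)"
        using norm_res_ge[OF sa d, of s] unfolding c_def by auto
    qed
    have sp: "\<bar>s\<bar> > 0" using s0 by simp
    have "Cauchy ps"
    proof (rule metric_CauchyI)
      fix e :: real assume e: "0 < e"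
      have "e * \<bar>s\<bar> > 0" using sp e by simp
      then obtain M where M: "\<forall>m\<ge>M. \<forall>n\<ge>M. dist (x m) (x n) < e * \<bar>s\<bar>"
        using xC unfolding Cauchy_def by blast
      show "\<exists>M. \<forall>m\<ge>M. \<forall>n\<ge>M. dist (ps m) (ps n) < e"
      proof (intro exI allI impI)
        fix m n assume "M \<le> m" "M \<le> n"
        hence "\<bar>s\<bar> * norm (ps m - ps n) < e * \<bar>s\<bar>"
        proof -
          have "norm (x m - x n) < e * \<bar>s\<bar>" using M \<open>M \<le> m\<close> \<open>M \<le> n\<close> by (simp add: dist_norm)
          thus ?thesis using bnd(1)[of m n] by linarith
        qed
        thus "dist (ps m) (ps n) < e" using sp by (simp add: dist_norm mult.commute)
      qed
    qed
    then obtain q where q: "ps \<longlonglongrightarrow> q" using Cauchy_convergent convergent_def by blast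
    have "Cauchy (\<lambda>n. H (ps n))"
    proof (rule metric_CauchyI)
      fix e :: real assume e: "0 < e"
      obtain M where M: "\<forall>m\<ge>M. \<forall>n\<ge>M. dist (x m) (x n) < e"
        using xC e unfolding Cauchy_def by blast
      show "\<exists>M. \<forall>m\<ge>M. \<forall>n\<ge>M. dist (H (ps m)) (H (ps n)) < e"
      proof (intro exI allI impI)
        fix m n assume "M \<le> m" "M \<le> n"
        thus "dist (H (ps m)) (H (ps n)) < e"
        proof -
          have "norm (x m - x n) < e" using M \<open>M \<le> m\<close> \<open>M \<le> n\<close> by (simp add: dist_norm)
          thus ?thesis using bnd(2)[of m n] lin_op_diff(2)[OF lin ps(1) ps(1), of m n]
            by (simp add: dist_norm)
        qed
      qed
    qed
    then obtain h where h: "(\<lambda>n. H (ps n)) \<longlonglongrightarrow> h" using Cauchy_convergent convergent_def by blast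
    have adjq: "\<forall>\<phi>\<in>D. cinner (H \<phi>) q = cinner \<phi> h"
    proof
      fix \<phi> assume \<phi>: "\<phi> \<in> D"
      have t1: "(\<lambda>n. cinner (H \<phi>) (ps n)) \<longlonglongrightarrow> cinner (H \<phi>) q"
        using bounded_linear.tendsto[OF bounded_linear_cinner_right q] .
      have t2: "(\<lambda>n. cinner \<phi> (H (ps n))) \<longlonglongrightarrow> cinner \<phi> h"
        using bounded_linear.tendsto[OF bounded_linear_cinner_right h] .
      have "(\<lambda>n. cinner (H \<phi>) (ps n)) = (\<lambda>n. cinner \<phi> (H (ps n)))"
        using sa_sym[OF sa \<phi> ps(1)] by simp
      with t1 t2 show "cinner (H \<phi>) q = cinner \<phi> h" using LIMSEQ_unique by metis
    qed
    have qD: "q \<in> D" using adj_op_eqI(1)[OF dense adjq] dom by simp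
    have "adj_op D H q = h" using adj_op_eqI(2)[OF dense adjq] .
    hence Hq: "H q = h" using op qD by simp
    have "(\<lambda>n. H (ps n) + scaleC c (ps n)) \<longlonglongrightarrow> h + scaleC c q"
      by (intro tendsto_add h bounded_linear.tendsto[OF bounded_linear_scaleC q])
    moreover have "x = (\<lambda>n. H (ps n) + scaleC c (ps n))" using ps(2) by (rule ext)
    ultimately have "x \<longlonglongrightarrow> H q + scaleC c q" using Hq by simp
    hence "l = H q + scaleC c q" using xl LIMSEQ_unique by blast
    thus "l \<in> V" unfolding V_def using qD by blast
  qed
  have perp: "z = 0" if zp: "\<forall>v\<in>V. cinner v z = 0" for z
  proof -
    have "\<forall>\<psi>\<in>D. cinner (H \<psi>) z = cinner \<psi> (scaleC c z)"
    proof
      fix \<psi> assume \<psi>: "\<psi> \<in> D"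
      have "cinner (H \<psi> + scaleC c \<psi>) z = 0" using zp \<psi> unfolding V_def by blast
      hence "cinner (H \<psi>) z = - (cnj c * cinner \<psi> z)"
        by (simp add: cinner_add_left cinner_scaleC_left eq_neg_iff_add_eq_0)
      also have "\<dots> = cinner \<psi> (scaleC c z)"
        by (simp add: cinner_scaleC_right c_def)
      finally show "cinner (H \<psi>) z = cinner \<psi> (scaleC c z)" .
    qed
    hence zD: "z \<in> D" and "adj_op D H z = scaleC c z"
      using adj_op_eqI[OF dense, of H z "scaleC c z"] dom by auto
    hence Hz: "H z = scaleC c z" using op by simp
    have "cinner (H z) z = cinner z (H z)" using sa_sym[OF sa zD zD] .
    hence "cnj c * cinner z z = c * cinner z z"
      unfolding Hz cinner_scaleC_left cinner_scaleC_right .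
    hence "(c - cnj c) * cinner z z = 0" by (metis left_diff_distrib right_minus_eq)
    moreover have "c - cnj c \<noteq> 0" using s0 by (simp add: c_def complex_eq_iff)
    ultimately have "cinner z z = 0" by simp
    thus "z = 0" using cinner_self_zero_iff by blast
  qed
  have "V = UNIV" using closed_subspace_perp_UNIV[OF sub cl] perp by blast
  hence "y \<in> V" by simp
  thus ?thesis unfolding V_def c_def by blast
qed



definition strip :: "real \<Rightarrow> complex set" where "strip R = {\<theta>. \<bar>Im \<theta>\<bar> < R}"

lemma strip_open: "open (strip R)"
proof -
  have "strip R = {\<theta>. Im \<theta> < R} \<inter> {\<theta>. Im \<theta> > -R}" unfolding strip_def by auto
  thus ?thesis using open_halfspace_Im_lt open_halfspace_Im_gt by (simp add: open_Int)
qed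

lemma strip_connected: "connected (strip R)"
proof -
  have "strip R = {\<theta>. Im \<theta> < R} \<inter> {\<theta>. Im \<theta> > -R}" unfolding strip_def by auto
  hence "convex (strip R)" using convex_halfspace_Im_lt convex_halfspace_Im_gt by (simp add: convex_Int)
  thus ?thesis by (rule convex_connected)
qed

lemma reals_strip: "R > 0 \<Longrightarrow> \<real> \<subseteq> strip R"
  unfolding strip_def by (auto elim!: Reals_cases)

lemma cnj_strip: "\<theta> \<in> strip R \<Longrightarrow> cnj \<theta> \<in> strip R"
  unfolding strip_def by simp

lemma cnj_image_strip: "cnj ` strip R = strip R"
proof
  show "cnj ` strip R \<subseteq> strip R" using cnj_strip by blast
  show "strip R \<subseteq> cnj ` strip R"
  proof
    fix z assume "z \<in> strip R"
    hence "cnj z \<in> strip R" by (rule cnj_strip)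
    thus "z \<in> cnj ` strip R" by (metis complex_cnj_cnj image_eqI)
  qed
qed

lemma zero_limpt_reals: "(0::complex) islimpt \<real>"
proof -
  have "\<exists>x'\<in>(\<real>::complex set). x' \<noteq> 0 \<and> dist x' 0 < (e::real)" if "e > 0" for e
    apply (rule bexI[of _ "complex_of_real (e/2)"])
    using that apply (simp add: dist_norm)
    apply simp
    done
  thus ?thesis unfolding islimpt_approachable by blast
qed

lemma vhol_scalar:
  fixes f :: "complex \<Rightarrow> 'a::chilbert"
  assumes "vholomorphic_on f S"
  shows "(\<lambda>\<theta>. cinner gg (f \<theta>)) holomorphic_on S"
  unfolding holomorphic_on_def
proof
  fix z assume "z \<in> S"
  then obtain v where v: "(f has_derivative (\<lambda>h. scaleC h v)) (at z)"
    using assms unfolding vholomorphic_on_def by blast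
  have "((\<lambda>\<theta>. cinner gg (f \<theta>)) has_derivative (\<lambda>h. cinner gg (scaleC h v))) (at z)"
    using bounded_linear.has_derivative[OF bounded_linear_cinner_right v] .
  moreover have "(\<lambda>h. cinner gg (scaleC h v)) = (*) (cinner gg v)"
    by (rule ext) (simp add: cinner_scaleC_right mult.commute)
  ultimately have "((\<lambda>\<theta>. cinner gg (f \<theta>)) has_field_derivative (cinner gg v)) (at z)"
    unfolding has_field_derivative_def by simp
  hence "((\<lambda>\<theta>. cinner gg (f \<theta>)) has_field_derivative (cinner gg v)) (at z within S)"
    by (rule has_field_derivative_at_within)
  thus "(\<lambda>\<theta>. cinner gg (f \<theta>)) field_differentiable at z within S"
    unfolding field_differentiable_def by blast
qed

lemma identity_vec:
  fixes F :: "complex \<Rightarrow> 'a::chilbert"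
  assumes R: "R > 0" and hol: "\<And>gg. (\<lambda>\<theta>. cinner gg (F \<theta>)) holomorphic_on strip R"
    and re: "\<And>t. F (complex_of_real t) = 0" and th: "\<theta> \<in> strip R"
  shows "F \<theta> = 0"
proof -
  have "(\<lambda>w. cinner (F \<theta>) (F w)) \<theta> = 0"
  proof (rule analytic_continuation[OF hol strip_open strip_connected reals_strip[OF R] _ zero_limpt_reals _ th])
    show "0 \<in> strip R" using R unfolding strip_def by simp
    fix z :: complex assume "z \<in> \<real>"
    then obtain t where "z = complex_of_real t" by (auto elim: Reals_cases)
    thus "cinner (F \<theta>) (F z) = 0" using re by simp
  qed
  thus ?thesis using cinner_self_zero_iff by blast
qed

lemma exp_facts:
  assumes "is_exp_itA DA A U"
  shows "lin_op UNIV (U t)" "norm (U t x) = norm x" "U t (U (-t) x) = x" "U 0 x = x"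
    "cinner (U t x) (U t y) = cinner x y"
proof -
  have U0: "U 0 = id" and Ug: "\<forall>s t. U (s + t) = U s \<circ> U t"
    and Ul: "\<forall>t. lin_op UNIV (U t) \<and> (\<forall>x. norm (U t x) = norm x)"
    using assms unfolding is_exp_itA_def by auto
  show "lin_op UNIV (U t)" "norm (U t x) = norm x" using Ul by auto
  show "U 0 x = x" using U0 by simp
  have "U (t + -t) = U t \<circ> U (-t)" using Ug by blast
  thus "U t (U (-t) x) = x" using U0 by (metis add.right_inverse comp_apply id_apply)
  show "cinner (U t x) (U t y) = cinner x y"
    using cinner_preserve[of "U t"] Ul by blast
qed



lemma G3D:
  assumes "condG3 DH H U R Hth"
  shows "R > 0" "\<And>\<psi>. \<psi> \<in> DH \<Longrightarrow> vholomorphic_on (\<lambda>\<theta>. Hth \<theta> \<psi>) (strip R)"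
    "\<And>\<psi> t. \<psi> \<in> DH \<Longrightarrow> Hth (complex_of_real t) \<psi> = U t (H (U (- t) \<psi>))"
  using assms unfolding condG3_def strip_def by auto

lemma Hth_hol:
  assumes "condG3 DH H U R Hth" "\<psi> \<in> DH"
  shows "(\<lambda>\<theta>. cinner gg (Hth \<theta> \<psi>)) holomorphic_on strip R"
  using vhol_scalar G3D(2)[OF assms] by blast

lemma G1D:
  assumes "condG1 DH H U" "\<psi> \<in> DH"
  shows "U t \<psi> \<in> DH"
  using assms unfolding condG1_def by blast

lemma Hth_add:
  fixes DH :: "'a::chilbert set"
  assumes sa: "self_adjoint DH H" and ex: "is_exp_itA DA A U" and g1: "condG1 DH H U"
    and g3: "condG3 DH H U R Hth" and x: "x \<in> DH" and y: "y \<in> DH" and th: "\<theta> \<in> strip R"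
  shows "Hth \<theta> (x + y) = Hth \<theta> x + Hth \<theta> y"
proof -
  have lin: "lin_op DH H" using sa unfolding self_adjoint_def by auto
  note L = lin_opD[OF lin]
  have xy: "x + y \<in> DH" using L(2)[OF x y] .
  define F where "F = (\<lambda>\<theta>. Hth \<theta> (x + y) - Hth \<theta> x - Hth \<theta> y)"
  have "F \<theta> = 0"
  proof (rule identity_vec[OF G3D(1)[OF g3] _ _ th])
    fix gg :: 'a
    have "(\<lambda>\<theta>. cinner gg (Hth \<theta> (x + y)) - cinner gg (Hth \<theta> x) - cinner gg (Hth \<theta> y)) holomorphic_on strip R"
      by (intro holomorphic_on_diff Hth_hol[OF g3] xy x y)
    thus "(\<lambda>\<theta>. cinner gg (F \<theta>)) holomorphic_on strip R"
      unfolding F_def by (simp add: cinner_diff_right)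
  next
    fix t
    have Ul: "lin_op UNIV (U s)" for s using exp_facts(1)[OF ex] .
    have "U (-t) (x + y) = U (-t) x + U (-t) y" using lin_opD(4)[OF Ul] by simp
    moreover have "H (U (-t) x + U (-t) y) = H (U (-t) x) + H (U (-t) y)"
      using L(4) G1D[OF g1 x] G1D[OF g1 y] by blast
    moreover have "U t (H (U (-t) x) + H (U (-t) y)) = U t (H (U (-t) x)) + U t (H (U (-t) y))"
      using lin_opD(4)[OF Ul] by simp
    ultimately show "F (complex_of_real t) = 0"
      unfolding F_def using G3D(3)[OF g3 x] G3D(3)[OF g3 y] G3D(3)[OF g3 xy] by simp
  qed
  thus ?thesis unfolding F_def by (simp add: algebra_simps)
qed

lemma Hth_scale:
  fixes DH :: "'a::chilbert set"
  assumes sa: "self_adjoint DH H" and ex: "is_exp_itA DA A U" and g1: "condG1 DH H U"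
    and g3: "condG3 DH H U R Hth" and x: "x \<in> DH" and th: "\<theta> \<in> strip R"
  shows "Hth \<theta> (scaleC a x) = scaleC a (Hth \<theta> x)"
proof -
  have lin: "lin_op DH H" using sa unfolding self_adjoint_def by auto
  note L = lin_opD[OF lin]
  have ax: "scaleC a x \<in> DH" using L(3)[OF x] .
  define F where "F = (\<lambda>\<theta>. Hth \<theta> (scaleC a x) - scaleC a (Hth \<theta> x))"
  have "F \<theta> = 0"
  proof (rule identity_vec[OF G3D(1)[OF g3] _ _ th])
    fix gg :: 'a
    have "(\<lambda>\<theta>. cinner gg (Hth \<theta> (scaleC a x)) - a * cinner gg (Hth \<theta> x)) holomorphic_on strip R"
      by (intro holomorphic_on_diff holomorphic_on_mult holomorphic_on_const Hth_hol[OF g3] ax x)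
    thus "(\<lambda>\<theta>. cinner gg (F \<theta>)) holomorphic_on strip R"
      unfolding F_def by (simp add: cinner_diff_right cinner_scaleC_right)
  next
    fix t
    have Ul: "lin_op UNIV (U s)" for s using exp_facts(1)[OF ex] .
    have "U (-t) (scaleC a x) = scaleC a (U (-t) x)" using lin_opD(5)[OF Ul] by simp
    moreover have "H (scaleC a (U (-t) x)) = scaleC a (H (U (-t) x))"
      using L(5) G1D[OF g1 x] by blast
    moreover have "U t (scaleC a (H (U (-t) x))) = scaleC a (U t (H (U (-t) x)))"
      using lin_opD(5)[OF Ul] by simp
    ultimately show "F (complex_of_real t) = 0"
      unfolding F_def using G3D(3)[OF g3 x] G3D(3)[OF g3 ax] by simp
  qed
  thus ?thesis unfolding F_def by simp
qed

lemma Hth_zero: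
  assumes ex: "is_exp_itA DA A U" and g3: "condG3 DH H U R Hth" and x: "x \<in> DH"
  shows "Hth 0 x = H x"
  using G3D(3)[OF g3 x, of 0] exp_facts(4)[OF ex] by simp

lemma Hth_sym:
  fixes DH :: "'a::chilbert set"
  assumes sa: "self_adjoint DH H" and ex: "is_exp_itA DA A U" and g1: "condG1 DH H U"
    and g3: "condG3 DH H U R Hth" and \<psi>: "\<psi> \<in> DH" and \<phi>: "\<phi> \<in> DH" and th: "\<theta> \<in> strip R"
  shows "cinner (Hth \<theta> \<psi>) \<phi> = cinner \<psi> (Hth (cnj \<theta>) \<phi>)"
proof -
  define G where "G = (\<lambda>\<theta>. cinner \<phi> (Hth \<theta> \<psi>) - cnj (cinner \<psi> (Hth (cnj \<theta>) \<phi>)))"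
  have hol1: "(\<lambda>\<theta>. cinner \<phi> (Hth \<theta> \<psi>)) holomorphic_on strip R" using Hth_hol[OF g3 \<psi>] .
  have "cnj \<circ> (\<lambda>\<theta>. cinner \<psi> (Hth \<theta> \<phi>)) \<circ> cnj holomorphic_on strip R"
    by (rule holomorphic_on_compose_cnj_cnj) (simp_all add: cnj_image_strip Hth_hol[OF g3 \<phi>] strip_open)
  hence hol2: "(\<lambda>\<theta>. cnj (cinner \<psi> (Hth (cnj \<theta>) \<phi>))) holomorphic_on strip R"
    by (simp add: o_def)
  have holG: "G holomorphic_on strip R" unfolding G_def by (intro holomorphic_on_diff hol1 hol2)
  have R: "R > 0" using G3D(1)[OF g3] .
  have "G \<theta> = 0"
  proof (rule analytic_continuation[OF holG strip_open strip_connected reals_strip[OF R] _ zero_limpt_reals _ th])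
    show "0 \<in> strip R" using R unfolding strip_def by simp
    fix z :: complex assume "z \<in> \<real>"
    then obtain t where z: "z = complex_of_real t" by (auto elim: Reals_cases)
    define \<psi>' where "\<psi>' = U (-t) \<psi>"
    define \<phi>' where "\<phi>' = U (-t) \<phi>"
    have D': "\<psi>' \<in> DH" "\<phi>' \<in> DH" unfolding \<psi>'_def \<phi>'_def using G1D[OF g1] \<psi> \<phi> by auto
    have e1: "Hth z \<psi> = U t (H \<psi>')" unfolding z \<psi>'_def using G3D(3)[OF g3 \<psi>] .
    have e2: "Hth (cnj z) \<phi> = U t (H \<phi>')" unfolding z \<phi>'_def using G3D(3)[OF g3 \<phi>] by simp
    have "cinner \<phi> (U t (H \<psi>')) = cinner (U t \<phi>') (U t (H \<psi>'))"
      unfolding \<phi>'_def exp_facts(3)[OF ex] ..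
    also have "\<dots> = cinner \<phi>' (H \<psi>')" by (rule exp_facts(5)[OF ex])
    also have "\<dots> = cinner (H \<phi>') \<psi>'" using sa_sym[OF sa D'(2) D'(1)] by simp
    also have "\<dots> = cinner (U t (H \<phi>')) (U t \<psi>')" by (rule exp_facts(5)[OF ex, symmetric])
    also have "\<dots> = cinner (U t (H \<phi>')) \<psi>" unfolding \<psi>'_def exp_facts(3)[OF ex] ..
    also have "\<dots> = cnj (cinner \<psi> (U t (H \<phi>')))" by (rule cinner_commute)
    finally show "G z = 0" unfolding G_def e1 e2 by simp
  qed
  hence "cinner \<phi> (Hth \<theta> \<psi>) = cnj (cinner \<psi> (Hth (cnj \<theta>) \<phi>))" unfolding G_def by simp
  hence "cnj (cinner \<phi> (Hth \<theta> \<psi>)) = cinner \<psi> (Hth (cnj \<theta>) \<phi>)" by simp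
  thus ?thesis by (metis cinner_commute)
qed



lemma res_uniq:
  fixes DH :: "'a::chilbert set"
  assumes sa: "self_adjoint DH H" and a: "a \<in> DH" and b: "b \<in> DH"
    and eq: "H a + scaleC \<i> a = H b + scaleC \<i> b"
  shows "a = b"
proof -
  have lin: "lin_op DH H" using sa unfolding self_adjoint_def by auto
  have d: "a - b \<in> DH" using lin_op_diff(1)[OF lin a b] .
  have "H (a - b) + scaleC \<i> (a - b) = (H a + scaleC \<i> a) - (H b + scaleC \<i> b)"
    by (simp add: lin_op_diff(2)[OF lin a b] scaleC_diff_right)
  hence "H (a - b) + scaleC \<i> (a - b) = 0" using eq by simp
  hence "\<bar>1\<bar> * norm (a - b) \<le> 0" using norm_res_ge(1)[OF sa d, of 1] by simp
  thus ?thesis by simp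
qed

lemma res_i_eq:
  fixes DH :: "'a::chilbert set"
  assumes sa: "self_adjoint DH H" and a: "a \<in> DH"
  shows "res_i DH H (H a + scaleC \<i> a) = a"
  unfolding res_i_def
proof (rule the_equality)
  show "a \<in> DH \<and> H a + scaleC \<i> a = H a + scaleC \<i> a" using a by simp
  fix b assume "b \<in> DH \<and> H b + scaleC \<i> b = H a + scaleC \<i> a"
  thus "b = a" using res_uniq[OF sa, of b a] a by blast
qed

lemma strip_disc: assumes "cmod \<theta> < R" shows "\<theta> \<in> strip R"
  unfolding strip_def using abs_Im_le_cmod[of \<theta>] assms by simp

lemma M_bound:
  fixes DH :: "'a::chilbert set"
  assumes sa: "self_adjoint DH H" and ex: "is_exp_itA DA A U" and g1: "condG1 DH H U"
    and g3: "condG3 DH H U R Hth" and g4: "condG4 DH H R Hth"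
    and \<psi>: "\<psi> \<in> DH" and th: "cmod \<theta> < R"
  shows "norm (Hth \<theta> \<psi>) \<le> G4_M DH H R Hth * norm (H \<psi> + scaleC \<i> \<psi>)"
proof -
  have lin: "lin_op DH H" using sa unfolding self_adjoint_def by auto
  note L = lin_opD[OF lin]
  have ths: "\<theta> \<in> strip R" using strip_disc[OF th] .
  define n where "n = norm (H \<psi> + scaleC \<i> \<psi>)"
  show ?thesis
  proof (cases "n = 0")
    case True
    hence "\<bar>1\<bar> * norm \<psi> \<le> 0" using norm_res_ge(1)[OF sa \<psi>, of 1] n_def by simp
    hence "\<psi> = 0" by simp
    hence "Hth \<theta> \<psi> = 0" using Hth_scale[OF sa ex g1 g3 \<psi> ths, of 0] by simp
    thus ?thesis using True n_def by simp
  next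
    case False
    hence n0: "n > 0" unfolding n_def by simp
    define \<psi>1 where "\<psi>1 = scaleC (complex_of_real (1/n)) \<psi>"
    have \<psi>1D: "\<psi>1 \<in> DH" unfolding \<psi>1_def using L(3)[OF \<psi>] .
    define \<phi> where "\<phi> = H \<psi>1 + scaleC \<i> \<psi>1"
    have "\<phi> = scaleC (complex_of_real (1/n)) (H \<psi> + scaleC \<i> \<psi>)"
      unfolding \<phi>_def \<psi>1_def using L(5)[OF \<psi>]
      by (simp add: scaleC_add_right scaleC_mult[symmetric] mult.commute)
    hence "norm \<phi> = cmod (complex_of_real (1/n)) * n" by (simp only: norm_scaleC n_def)
    hence n\<phi>: "norm \<phi> = 1" using n0 by (simp only: norm_of_real) simp
    have "res_i DH H \<phi> = \<psi>1" unfolding \<phi>_def using res_i_eq[OF sa \<psi>1D] .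
    hence "norm (Hth \<theta> \<psi>1) \<in> G4_set DH H R Hth"
      unfolding G4_set_def using th n\<phi> by force
    hence "norm (Hth \<theta> \<psi>1) \<le> G4_M DH H R Hth"
      unfolding G4_M_def using g4 unfolding condG4_def by (rule cSup_upper)
    moreover have "norm (Hth \<theta> \<psi>1) = norm (Hth \<theta> \<psi>) / n"
      unfolding \<psi>1_def Hth_scale[OF sa ex g1 g3 \<psi> ths] using n0 by (simp add: norm_scaleC norm_divide)
    ultimately show ?thesis using n0 unfolding n_def[symmetric] by (simp add: field_simps)
  qed
qed



lemma rel_bound:
  fixes DH :: "'a::chilbert set"
  assumes sa: "self_adjoint DH H" and ex: "is_exp_itA DA A U" and g1: "condG1 DH H U"
    and g3: "condG3 DH H U R Hth" and g4: "condG4 DH H R Hth"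
    and \<psi>: "\<psi> \<in> DH" and th: "cmod \<theta> < R"
  shows "norm (Hth \<theta> \<psi> - H \<psi>) \<le> 2 * max 1 (G4_M DH H R Hth) * cmod \<theta> / R * norm (H \<psi> + scaleC \<i> \<psi>)"
proof -
  define M where "M = G4_M DH H R Hth"
  define K1 where "K1 = max 1 M"
  have K1: "K1 \<ge> 1" "M \<le> K1" unfolding K1_def by auto
  have R: "R > 0" using G3D(1)[OF g3] .
  have lin: "lin_op DH H" using sa unfolding self_adjoint_def by auto
  define n where "n = norm (H \<psi> + scaleC \<i> \<psi>)"
  define v where "v = Hth \<theta> \<psi> - H \<psi>"
  have rhs0: "0 \<le> 2 * K1 * cmod \<theta> / R * n" using K1 R unfolding n_def by simp
  show ?thesis
  proof (cases "v = 0")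
    case True
    thus ?thesis using rhs0 unfolding v_def K1_def M_def n_def by simp
  next
    case False
    have \<psi>0: "\<psi> \<noteq> 0"
    proof
      assume "\<psi> = 0"
      hence "Hth \<theta> \<psi> = 0" "H \<psi> = 0"
        using Hth_scale[OF sa ex g1 g3 \<psi> strip_disc[OF th], of 0] lin_op_diff(3)[OF lin \<psi> \<psi>] by auto
      thus False using False v_def by simp
    qed
    have nsq: "n^2 = (norm (H \<psi>))^2 + (norm \<psi>)^2"
      using norm_res[OF sa \<psi>, of 1] unfolding n_def by simp
    have Hn: "norm (H \<psi>) < n"
    proof -
      have "(norm (H \<psi>))^2 < n^2" using nsq \<psi>0 by simp
      thus ?thesis unfolding n_def using power_less_imp_less_base norm_ge_zero by blast
    qed
    have n0: "n > 0" using Hn by (meson le_less_trans norm_ge_zero)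
    define K where "K = 2 * K1 * n"
    have K0: "K > 0" using n0 K1 unfolding K_def by simp
    have nv: "norm v > 0" using False by simp
    define f where "f = (\<lambda>w. cinner v (Hth (complex_of_real R * w) \<psi>) / complex_of_real (K * norm v)
        - cinner v (H \<psi>) / complex_of_real (K * norm v))"
    have hol_strip: "(\<lambda>z. cinner v (Hth z \<psi>)) holomorphic_on strip R" using Hth_hol[OF g3 \<psi>] .
    have img: "(\<lambda>w. complex_of_real R * w) ` ball 0 1 \<subseteq> strip R"
    proof
      fix z assume "z \<in> (\<lambda>w. complex_of_real R * w) ` ball 0 1"
      then obtain w where w: "cmod w < 1" "z = complex_of_real R * w" by auto
      have "cmod z = R * cmod w" using w R by (simp add: norm_mult)
      also have "\<dots> < R" using w R by simp
      finally show "z \<in> strip R" by (rule strip_disc)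
    qed
    have "((\<lambda>z. cinner v (Hth z \<psi>)) \<circ> (\<lambda>w. complex_of_real R * w)) holomorphic_on ball 0 1"
      by (rule holomorphic_on_compose_gen[OF _ hol_strip img]) (intro holomorphic_intros)
    hence hc: "(\<lambda>w. cinner v (Hth (complex_of_real R * w) \<psi>)) holomorphic_on ball 0 1"
      by (simp add: o_def)
    have Kv: "complex_of_real (K * norm v) \<noteq> 0" using K0 nv by simp
    have holf: "f holomorphic_on ball 0 1"
      unfolding f_def by (intro holomorphic_on_diff holomorphic_on_divide hc holomorphic_on_const Kv)
    have f0: "f 0 = 0"
      unfolding f_def using Hth_zero[OF ex g3 \<psi>] by simp
    have fe: "f w = cinner v (Hth (complex_of_real R * w) \<psi> - H \<psi>) / complex_of_real (K * norm v)" for w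
      unfolding f_def by (simp add: cinner_diff_right diff_divide_distrib)
    have fb: "norm (f w) < 1" if w: "norm w < 1" for w
    proof -
      define z where "z = complex_of_real R * w"
      have "cmod z = R * cmod w" using R by (simp add: z_def norm_mult)
      also have "\<dots> < R" using w R by simp
      finally have z: "cmod z < R" .
      have b1: "norm (Hth z \<psi>) \<le> M * n" using M_bound[OF sa ex g1 g3 g4 \<psi> z] unfolding M_def n_def .
      have "M * n \<le> K1 * n" using K1 n0 by simp
      hence b1': "norm (Hth z \<psi>) \<le> K1 * n" using b1 by linarith
      have b2: "norm (H \<psi>) < K1 * n" using Hn K1 n0
        by (smt (verit, best) mult_le_cancel_right1)
      have "norm (Hth z \<psi> - H \<psi>) \<le> norm (Hth z \<psi>) + norm (H \<psi>)" by (rule norm_triangle_ineq4)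
      also have "\<dots> < K" unfolding K_def using b1' b2 by linarith
      finally have lt: "norm (Hth z \<psi> - H \<psi>) < K" .
      have "cmod (cinner v (Hth z \<psi> - H \<psi>)) \<le> norm v * norm (Hth z \<psi> - H \<psi>)" by (rule cauchy_schwarz)
      also have "\<dots> < norm v * K" using lt nv by simp
      finally have "cmod (cinner v (Hth z \<psi> - H \<psi>)) < K * norm v" by (simp add: mult.commute)
      moreover have "cmod (complex_of_real (K * norm v)) = K * norm v" using K0 by (simp only: norm_of_real) simp
      ultimately show ?thesis unfolding fe z_def[symmetric] using K0 nv by (simp only: norm_divide) simp
    qed
    define \<xi> where "\<xi> = \<theta> / complex_of_real R"
    have \<xi>: "norm \<xi> < 1" unfolding \<xi>_def using th R by (simp add: norm_divide)
    have sch: "norm (f \<xi>) \<le> norm \<xi>" using Schwarz_Lemma(1)[OF holf f0 fb \<xi>] .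
    have "complex_of_real R * \<xi> = \<theta>" unfolding \<xi>_def using R by simp
    hence "f \<xi> = cinner v v / complex_of_real (K * norm v)" unfolding fe v_def by simp
    also have "\<dots> = complex_of_real (norm v / K)"
      unfolding cinner_self using nv K0 by (simp add: power2_eq_square)
    finally have "norm v / K \<le> cmod \<theta> / R"
      using sch K0 nv R unfolding \<xi>_def by (simp add: norm_divide)
    hence "norm v \<le> K * (cmod \<theta> / R)" using K0 by (simp add: field_simps)
    thus ?thesis unfolding v_def K_def K1_def M_def n_def by (simp add: field_simps)
  qed
qed



lemma pert_surj:
  fixes DH :: "'a::chilbert set"
  assumes sa: "self_adjoint DH H"
    and Tlin: "\<And>x y. x \<in> DH \<Longrightarrow> y \<in> DH \<Longrightarrow> T (x - y) = T x - T y"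
    and Tb: "\<And>\<psi>. \<psi> \<in> DH \<Longrightarrow> norm (T \<psi> - H \<psi>) \<le> q * norm (H \<psi> + scaleC \<i> \<psi>)"
    and q: "0 \<le> q" "q < 1" and s: "s^2 = 1"
  shows "\<exists>\<psi>\<in>DH. T \<psi> + scaleC (complex_of_real s * \<i>) \<psi> = y"
proof -
  define c where "c = complex_of_real s * \<i>"
  have lin: "lin_op DH H" using sa unfolding self_adjoint_def by auto
  have s0: "s \<noteq> 0" using s by auto
  define Rs where "Rs = (\<lambda>x. SOME \<psi>. \<psi> \<in> DH \<and> H \<psi> + scaleC c \<psi> = x)"
  have Rs: "Rs x \<in> DH \<and> H (Rs x) + scaleC c (Rs x) = x" for x
  proof -
    have "\<exists>\<psi>. \<psi> \<in> DH \<and> H \<psi> + scaleC c \<psi> = x" using res_surj[OF sa s0, of x] unfolding c_def by blast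
    thus ?thesis unfolding Rs_def by (rule someI_ex)
  qed
  have neq: "norm (H d + scaleC \<i> d) = norm (H d + scaleC c d)" if d: "d \<in> DH" for d
  proof -
    have "(norm (H d + scaleC \<i> d))^2 = (norm (H d + scaleC c d))^2"
      using norm_res[OF sa d, of 1] norm_res[OF sa d, of s] s unfolding c_def by simp
    thus ?thesis by (meson norm_ge_zero power2_eq_iff_nonneg)
  qed
  define F where "F = (\<lambda>x. y - (T (Rs x) - H (Rs x)))"
  have lip: "\<forall>a b. dist (F a) (F b) \<le> q * dist a b"
  proof (intro allI)
    fix a b
    define d where "d = Rs a - Rs b"
    have dD: "d \<in> DH" unfolding d_def using lin_op_diff(1)[OF lin] Rs by blast
    have "F a - F b = - (T d - H d)"
      unfolding F_def d_def using Tlin[of "Rs a" "Rs b"] lin_op_diff(2)[OF lin, of "Rs a" "Rs b"] Rs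
      by (simp add: algebra_simps)
    hence "dist (F a) (F b) = norm (T d - H d)" by (simp add: dist_norm norm_minus_commute)
    also have "\<dots> \<le> q * norm (H d + scaleC \<i> d)" using Tb[OF dD] .
    also have "norm (H d + scaleC \<i> d) = norm (H d + scaleC c d)" using neq[OF dD] .
    also have "H d + scaleC c d = a - b"
    proof -
      have "H d + scaleC c d = H (Rs a) - H (Rs b) + (scaleC c (Rs a) - scaleC c (Rs b))"
        unfolding d_def lin_op_diff(2)[OF lin conjunct1[OF Rs] conjunct1[OF Rs]]
        by (simp add: scaleC_diff_right)
      also have "\<dots> = (H (Rs a) + scaleC c (Rs a)) - (H (Rs b) + scaleC c (Rs b))"
        by (simp add: algebra_simps)
      finally show ?thesis using Rs[of a] Rs[of b] by simp
    qed
    finally show "dist (F a) (F b) \<le> q * dist a b" by (simp add: dist_norm)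
  qed
  obtain x where x: "F x = x" using banach_fix_type[OF q lip] by blast
  define \<psi> where "\<psi> = Rs x"
  have "T \<psi> + scaleC c \<psi> = (T \<psi> - H \<psi>) + (H \<psi> + scaleC c \<psi>)" by simp
  also have "\<dots> = (T \<psi> - H \<psi>) + x" using Rs[of x] \<psi>_def by simp
  also have "\<dots> = y" using x unfolding F_def \<psi>_def by (metis add_diff_cancel_left' diff_add_cancel)
  finally show ?thesis using Rs[of x] \<psi>_def c_def by blast
qed

lemma Hth_diff:
  fixes DH :: "'a::chilbert set"
  assumes sa: "self_adjoint DH H" and ex: "is_exp_itA DA A U" and g1: "condG1 DH H U"
    and g3: "condG3 DH H U R Hth" and x: "x \<in> DH" and y: "y \<in> DH" and th: "\<theta> \<in> strip R"
  shows "Hth \<theta> (x - y) = Hth \<theta> x - Hth \<theta> y"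
proof -
  have lin: "lin_op DH H" using sa unfolding self_adjoint_def by auto
  have y': "scaleC (-1) y \<in> DH" using lin_opD(3)[OF lin y] .
  have "Hth \<theta> (x - y) = Hth \<theta> (x + scaleC (-1) y)" by (simp add: scaleC_neg1)
  also have "\<dots> = Hth \<theta> x + Hth \<theta> (scaleC (-1) y)" using Hth_add[OF sa ex g1 g3 x y' th] .
  also have "Hth \<theta> (scaleC (-1) y) = - Hth \<theta> y"
    using Hth_scale[OF sa ex g1 g3 y th, of "-1"] by (simp add: scaleC_neg1)
  finally show ?thesis by simp
qed

theorem mainTheorem6:
  fixes DH DA :: "'a::{chilbert, second_countable_topology} set"
    and H A :: "'a \<Rightarrow> 'a"
    and U :: "real \<Rightarrow> 'a \<Rightarrow> 'a"
    and R :: real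
    and Hth :: "complex \<Rightarrow> 'a \<Rightarrow> 'a"
    and \<theta> :: complex
  assumes "self_adjoint DH H" and "self_adjoint DA A"
    and "is_exp_itA DA A U"
    and "condG1 DH H U"
    and "condG2 DH H DA A"
    and "condG3 DH H U R Hth"
    and "condG4 DH H R Hth"
    and "cmod \<theta> < 1 / (3 * (max 1 (G4_M DH H R Hth) / R))"
  shows "adj_dom DH (Hth \<theta>) = DH \<and> (\<forall>\<phi>\<in>DH. adj_op DH (Hth \<theta>) \<phi> = Hth (cnj \<theta>) \<phi>)"
proof -
  note sa = assms(1) and ex = assms(3) and g1 = assms(4) and g3 = assms(6) and g4 = assms(7)
  define M where "M = G4_M DH H R Hth"
  define K1 where "K1 = max 1 M"
  have K1: "K1 \<ge> 1" unfolding K1_def by simp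
  have R: "R > 0" using G3D(1)[OF g3] .
  have dense: "closure DH = UNIV" using sa unfolding self_adjoint_def by auto
  have lin: "lin_op DH H" using sa unfolding self_adjoint_def by auto
  have th0: "cmod \<theta> < R / (3 * K1)" using assms(8) R K1 unfolding K1_def M_def by (simp add: field_simps)
  define q where "q = 2 * K1 * cmod \<theta> / R"
  have q0: "0 \<le> q" unfolding q_def using K1 R by simp
  have "q < 2 * K1 * (R / (3 * K1)) / R" unfolding q_def using th0 K1 R
    by (intro divide_strict_right_mono mult_strict_left_mono) auto
  also have "\<dots> = 2/3" using K1 R by (simp add: field_simps)
  finally have q1: "q < 1" by simp
  have thR: "cmod \<theta> < R"
  proof -
    have "R / (3 * K1) \<le> R" using K1 R by (simp add: field_simps)
    thus ?thesis using th0 by linarith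
  qed
  have thcR: "cmod (cnj \<theta>) < R" using thR by simp
  have ths: "\<theta> \<in> strip R" and thcs: "cnj \<theta> \<in> strip R" using strip_disc thR thcR by auto
  have b1: "norm (Hth \<theta> \<psi> - H \<psi>) \<le> q * norm (H \<psi> + scaleC \<i> \<psi>)" if "\<psi> \<in> DH" for \<psi>
    using rel_bound[OF sa ex g1 g3 g4 that thR] unfolding q_def K1_def M_def by simp
  have b2: "norm (Hth (cnj \<theta>) \<psi> - H \<psi>) \<le> q * norm (H \<psi> + scaleC \<i> \<psi>)" if "\<psi> \<in> DH" for \<psi>
    using rel_bound[OF sa ex g1 g3 g4 that thcR] unfolding q_def K1_def M_def by simp
  have sym: "cinner (Hth \<theta> \<psi>) \<phi> = cinner \<psi> (Hth (cnj \<theta>) \<phi>)" if "\<psi> \<in> DH" "\<phi> \<in> DH" for \<psi> \<phi>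
    using Hth_sym[OF sa ex g1 g3 that ths] .
  have part1: "\<phi> \<in> adj_dom DH (Hth \<theta>) \<and> adj_op DH (Hth \<theta>) \<phi> = Hth (cnj \<theta>) \<phi>" if \<phi>: "\<phi> \<in> DH" for \<phi>
    using adj_op_eqI[OF dense, of "Hth \<theta>" \<phi> "Hth (cnj \<theta>) \<phi>"] sym[OF _ \<phi>] by blast
  have part2: "\<phi> \<in> DH" if \<phi>: "\<phi> \<in> adj_dom DH (Hth \<theta>)" for \<phi>
  proof -
    obtain \<eta> where \<eta>: "\<forall>\<psi>\<in>DH. cinner (Hth \<theta> \<psi>) \<phi> = cinner \<psi> \<eta>"
      using \<phi> unfolding adj_dom_def by blast
    obtain \<psi>0 where \<psi>0: "\<psi>0 \<in> DH"
      and e0: "Hth (cnj \<theta>) \<psi>0 + scaleC (complex_of_real (-1) * \<i>) \<psi>0 = \<eta> - scaleC \<i> \<phi>"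
      using pert_surj[OF sa Hth_diff[OF sa ex g1 g3 _ _ thcs] b2 q0 q1, of "-1"] by auto
    have e0': "Hth (cnj \<theta>) \<psi>0 = \<eta> - scaleC \<i> \<phi> + scaleC \<i> \<psi>0"
      using e0 by (simp add: scaleC_minus_left algebra_simps)
    define chi where "chi = \<phi> - \<psi>0"
    obtain \<psi> where \<psi>: "\<psi> \<in> DH" and e1: "Hth \<theta> \<psi> + scaleC (complex_of_real 1 * \<i>) \<psi> = chi"
      using pert_surj[OF sa Hth_diff[OF sa ex g1 g3 _ _ ths] b1 q0 q1, of 1] by auto
    have "cinner chi chi = cinner (Hth \<theta> \<psi> + scaleC \<i> \<psi>) (\<phi> - \<psi>0)" using e1 chi_def by simp
    also have "\<dots> = cinner (Hth \<theta> \<psi>) \<phi> - cinner (Hth \<theta> \<psi>) \<psi>0 - \<i> * cinner \<psi> \<phi> + \<i> * cinner \<psi> \<psi>0"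
      by (simp add: cinner_add_left cinner_diff_right cinner_scaleC_left algebra_simps)
    also have "cinner (Hth \<theta> \<psi>) \<psi>0 = cinner \<psi> \<eta> - \<i> * cinner \<psi> \<phi> + \<i> * cinner \<psi> \<psi>0"
      unfolding sym[OF \<psi> \<psi>0] e0' by (simp add: cinner_add_right cinner_diff_right cinner_scaleC_right)
    also have "cinner (Hth \<theta> \<psi>) \<phi> = cinner \<psi> \<eta>" using \<eta> \<psi> by blast
    finally have "cinner chi chi = 0" by simp
    hence "chi = 0" using cinner_self_zero_iff by blast
    thus ?thesis using \<psi>0 chi_def by simp
  qed
  show ?thesis using part1 part2 by blast
qed


end
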